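(* Let $n,m,k$ be positive integers and consider variables $x_0,\dots,x_n$, $y_0,\dots,y_n$, $z_0,\dots,z_m$, $t_0,\dots,t_m$. Define the $k\times(n+k)$ matrices $f_1,f_2$, the $k\times(m+k)$ matrices $f_3,f_4$, the $(n+k)\times k$ matrices $g_1,g_2$ and the $(m+k)\times k$ matrices $g_3,g_4$ by $(f_1)_{i,j}=y_{n+k+1-i-j}$, $(f_2)_{i,j}=x_{n+k+1-i-j}$ if $0\le n+k+1-i-j\le n$ and $0$ otherwise; $(f_3)_{i,j}=t_{m+k+1-i-j}$, $(f_4)_{i,j}=z_{m+k+1-i-j}$ if $0\le m+k+1-i-j\le m$ and $0$ otherwise; $(g_1)_{r,j}=x_{r-j}$, $(g_2)_{r,j}=y_{r-j}$ if $0\le r-j\le n$ and $0$ otherwise; $(g_3)_{r,j}=z_{r-j}$, $(g_4)_{r,j}=t_{r-j}$ if $0\le r-j\le m$ and $0$ otherwise. (So, e.g., the last row of $f_1$ is $(y_n,\dots,y_0,0,\dots,0)$, its first row is $(0,\dots,0,y_n,\dots,y_0)$, and the $j$-th column of $g_1$ has $x_0,\dots,x_n$ in rows $j,\dots,j+n$.) Let $f=\begin{bmatrix} f_1 & -f_2 & f_3 & -f_4\end{bmatrix}$ (a $k\times(2n+2m+4k)$ matrix) and $g=\begin{bmatrix} g_1\\ g_2\\ g_3\\ g_4\end{bmatrix}$ (a $(2n+2m+4k)\times k$ matrix). Then (i) $f\cdot g=0$, and (ii) $f$ and $g$ have maximal rank $k$ whenever the variables are evaluated at a point where not all of $x_0,\dots,x_n$,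 $y_0,\dots,y_n$, $z_0,\dots,z_m$, $t_0,\dots,t_m$ vanish (in particular at every point of $\mathbb{P}^n\times\mathbb{P}^n\times\mathbb{P}^m\times\mathbb{P}^m$ with these homogeneous coordinates).
   Context: Here $x_i$, $y_i$ are homogeneous coordinates on the first and second factor $\mathbb{P}^n$, and $z_i$, $t_i$ on the third and fourth factor $\mathbb{P}^m$, of $\mathbb{P}^n\times\mathbb{P}^n\times\mathbb{P}^m\times\mathbb{P}^m$. "Maximal rank" means the rank equals $\min$ of the number of rows and columns, here $k$. *)

theory Defs
  imports "Jordan_Normal_Form.Matrix" "Jordan_Normal_Form.DL_Rank"
begin

text \<open>Matrices are 0-indexed here; the paper's index i (resp. j, r) corresponds to i+1 (resp. j+1, r+1).\<close>

definition band :: "nat \<Rightarrow> (nat \<Rightarrow> 'a::zero) \<Rightarrow> int \<Rightarrow> 'a" where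
  "band d v e = (if 0 \<le> e \<and> e \<le> int d then v (nat e) else 0)"

definition fmat :: "nat \<Rightarrow> nat \<Rightarrow> (nat \<Rightarrow> 'a::zero) \<Rightarrow> 'a mat" where
  "fmat d k v = mat k (d + k)
     (\<lambda>(i, j). band d v (int d + int k + 1 - (int i + 1) - (int j + 1)))"

definition gmat :: "nat \<Rightarrow> nat \<Rightarrow> (nat \<Rightarrow> 'a::zero) \<Rightarrow> 'a mat" where
  "gmat d k v = mat (d + k) k (\<lambda>(r, j). band d v ((int r + 1) - (int j + 1)))"

definition hcat :: "'a::zero mat \<Rightarrow> 'a mat \<Rightarrow> 'a mat" where
  "hcat A B = four_block_mat A B (0\<^sub>m 0 (dim_col A)) (0\<^sub>m 0 (dim_col B))"

definition f_mat :: "nat \<Rightarrow> nat \<Rightarrow> nat \<Rightarrow> (nat \<Rightarrow> 'a::ring_1) \<Rightarrow> (nat \<Rightarrow> 'a) \<Rightarrow>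
    (nat \<Rightarrow> 'a) \<Rightarrow> (nat \<Rightarrow> 'a) \<Rightarrow> 'a mat" where
  "f_mat n m k x y z t =
     hcat (fmat n k y) (hcat (- fmat n k x) (hcat (fmat m k t) (- fmat m k z)))"

definition g_mat :: "nat \<Rightarrow> nat \<Rightarrow> nat \<Rightarrow> (nat \<Rightarrow> 'a::ring_1) \<Rightarrow> (nat \<Rightarrow> 'a) \<Rightarrow>
    (nat \<Rightarrow> 'a) \<Rightarrow> (nat \<Rightarrow> 'a) \<Rightarrow> 'a mat" where
  "g_mat n m k x y z t =
     gmat n k x @\<^sub>r gmat n k y @\<^sub>r gmat m k z @\<^sub>r gmat m k t"

end

theory Submission
  imports Defs "Jordan_Normal_Form.Determinant"
begin


lemma band_conv_sym:
  fixes v w :: "nat \<Rightarrow> 'a::comm_ring_1"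
  assumes "i < k" "j < k"
  shows "(\<Sum>r<d+k. band d v (int d + int k + 1 - (int i + 1) - (int r + 1)) * band d w ((int r + 1) - (int j + 1)))
       = (\<Sum>r<d+k. band d w (int d + int k + 1 - (int i + 1) - (int r + 1)) * band d v ((int r + 1) - (int j + 1)))"
proof -
  define c where "c = int d + int k - 1 - int i"
  define N where "N = int (d + k)"
  define S where "S = {int j - N .. c + N}"
  define h where "h = (\<lambda>(v::nat\<Rightarrow>'a) (w::nat\<Rightarrow>'a) (s::int). band d v (c - s) * band d w (s - int j))"
  have step1: "(\<Sum>r<d+k. band d v (int d + int k + 1 - (int i + 1) - (int r + 1)) * band d w ((int r + 1) - (int j + 1)))
      = sum (h v w) S" for v w :: "nat \<Rightarrow> 'a"
  proof -
    have e: "int d + int k + 1 - (int i + 1) - (int r + 1) = c - int r" "(int r + 1) - (int j + 1) = int r - int j" for r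
      by (simp_all add: c_def)
    have "(\<Sum>r<d+k. band d v (int d + int k + 1 - (int i + 1) - (int r + 1)) * band d w ((int r + 1) - (int j + 1)))
        = (\<Sum>r<d+k. h v w (int r))" unfolding e h_def by simp
    also have "\<dots> = sum (h v w) (int ` {..<d+k})"
      by (simp add: sum.reindex)
    also have "\<dots> = sum (h v w) S"
    proof (rule sum.mono_neutral_left)
      show "finite S" by (simp add: S_def)
      show "int ` {..<d + k} \<subseteq> S" using assms by (auto simp: S_def c_def N_def)
      show "\<forall>s\<in>S - int ` {..<d + k}. h v w s = 0"
      proof
        fix s assume s: "s \<in> S - int ` {..<d + k}"
        have "s < 0 \<or> s \<ge> N"
        proof (rule ccontr)
          assume "\<not> (s < 0 \<or> s \<ge> N)"
          then have "s = int (nat s)" "nat s < d+k" by (auto simp: N_def)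
          then show False using s by (metis image_eqI lessThan_iff DiffE)
        qed
        then show "h v w s = 0"
        proof
          assume "s < 0" then have "s - int j < 0" by simp
          then show ?thesis by (simp add: h_def band_def)
        next
          assume "s \<ge> N" then have "c - s < 0" using assms by (simp add: c_def N_def)
          then show ?thesis by (simp add: h_def band_def)
        qed
      qed
    qed
    finally show ?thesis .
  qed
  have step2: "sum (h v w) S = sum (h w v) S"
  proof (rule sum.reindex_bij_witness[of _ "\<lambda>s. c + int j - s" "\<lambda>s. c + int j - s"])
    show "\<And>a. a \<in> S \<Longrightarrow> c + int j - (c + int j - a) = a" by simp
    show "\<And>a. a \<in> S \<Longrightarrow> c + int j - a \<in> S" by (auto simp: S_def)
    show "\<And>a. a \<in> S \<Longrightarrow> c + int j - (c + int j - a) = a" by simp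
    show "\<And>a. a \<in> S \<Longrightarrow> c + int j - a \<in> S" by (auto simp: S_def)
    show "\<And>a. a \<in> S \<Longrightarrow> h w v (c + int j - a) = h v w a" by (simp add: h_def mult.commute)
  qed
  show ?thesis using step1[of v w] step1[of w v] step2 by simp
qed

lemma fmat_gmat_entry:
  assumes "i < k" "j < k"
  shows "(fmat d k v * gmat d k w) $$ (i, j) = (\<Sum>r<d+k. band d v (int d + int k + 1 - (int i + 1) - (int r + 1)) * band d w ((int r + 1) - (int j + 1)))"
  using assms by (simp add: fmat_def gmat_def scalar_prod_def atLeast0LessThan)

lemma fmat_gmat_comm:
  fixes v w :: "nat \<Rightarrow> 'a::comm_ring_1"
  shows "fmat d k v * gmat d k w = fmat d k w * gmat d k v"
proof (rule eq_matI)
  fix i j assume "i < dim_row (fmat d k w * gmat d k v)" "j < dim_col (fmat d k w * gmat d k v)"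
  then have ij: "i < k" "j < k" by (auto simp: fmat_def gmat_def)
  show "(fmat d k v * gmat d k w) $$ (i, j) = (fmat d k w * gmat d k v) $$ (i, j)"
    unfolding fmat_gmat_entry[OF ij] by (rule band_conv_sym[OF ij])
qed (auto simp: fmat_def gmat_def)

lemma hcat_mult_append_rows:
  assumes A: "A \<in> carrier_mat nr n1" and B: "B \<in> carrier_mat nr n2"
    and C: "C \<in> carrier_mat n1 nc" and D: "D \<in> carrier_mat n2 nc"
  shows "hcat A B * (C @\<^sub>r D) = A * C + B * D"
proof -
  have "hcat A B * (C @\<^sub>r D) = four_block_mat A B (0\<^sub>m 0 n1) (0\<^sub>m 0 n2) * four_block_mat C (0\<^sub>m n1 0) D (0\<^sub>m n2 0)"
    using A B C D by (simp add: hcat_def append_rows_def)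
  also have "\<dots> = four_block_mat (A * C + B * D) (A * 0\<^sub>m n1 0 + B * 0\<^sub>m n2 0)
    (0\<^sub>m 0 n1 * C + 0\<^sub>m 0 n2 * D) (0\<^sub>m 0 n1 * 0\<^sub>m n1 0 + 0\<^sub>m 0 n2 * 0\<^sub>m n2 0)"
    by (rule mult_four_block_mat) (use A B C D in auto)
  also have "\<dots> = A * C + B * D"
    by (rule eq_matI) (use A B C D in auto)
  finally show ?thesis .
qed

lemma fmat_carrier: "fmat d k v \<in> carrier_mat k (d + k)" by (simp add: fmat_def)
lemma gmat_carrier: "gmat d k v \<in> carrier_mat (d + k) k" by (simp add: gmat_def)

lemma hcat_carrier: "A \<in> carrier_mat nr n1 \<Longrightarrow> B \<in> carrier_mat nr n2 \<Longrightarrow> hcat A B \<in> carrier_mat nr (n1 + n2)"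
  by (auto simp: hcat_def)

lemma part1:
  fixes x y z t :: "nat \<Rightarrow> 'a::comm_ring_1"
  shows "f_mat n m k x y z t * g_mat n m k x y z t = 0\<^sub>m k k"
proof -
  note c = fmat_carrier gmat_carrier
  have "f_mat n m k x y z t * g_mat n m k x y z t =
     fmat n k y * gmat n k x + ((- fmat n k x) * gmat n k y + (fmat m k t * gmat m k z + (- fmat m k z) * gmat m k t))"
  proof -
    have cm: "- fmat d k v \<in> carrier_mat k (d + k)" for d and v :: "nat \<Rightarrow> 'a" by (simp add: fmat_def)
    have h3: "hcat (fmat m k t) (- fmat m k z) * (gmat m k z @\<^sub>r gmat m k t) = fmat m k t * gmat m k z + (- fmat m k z) * gmat m k t"
      by (rule hcat_mult_append_rows) (auto intro: c cm)
    have h2: "hcat (- fmat n k x) (hcat (fmat m k t) (- fmat m k z)) * (gmat n k y @\<^sub>r gmat m k z @\<^sub>r gmat m k t)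
       = (- fmat n k x) * gmat n k y + hcat (fmat m k t) (- fmat m k z) * (gmat m k z @\<^sub>r gmat m k t)"
      by (rule hcat_mult_append_rows) (auto intro: c cm hcat_carrier)
    have h1: "hcat (fmat n k y) (hcat (- fmat n k x) (hcat (fmat m k t) (- fmat m k z))) * (gmat n k x @\<^sub>r gmat n k y @\<^sub>r gmat m k z @\<^sub>r gmat m k t)
       = fmat n k y * gmat n k x + hcat (- fmat n k x) (hcat (fmat m k t) (- fmat m k z)) * (gmat n k y @\<^sub>r gmat m k z @\<^sub>r gmat m k t)"
      by (rule hcat_mult_append_rows) (auto intro!: c cm hcat_carrier carrier_append_rows)
    show ?thesis unfolding f_mat_def g_mat_def h1 h2 h3 ..
  qed
  also have "\<dots> = 0\<^sub>m k k"
    unfolding uminus_mult_left_mat fmat_gmat_comm[of n k y x] fmat_gmat_comm[of m k t z]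
    by (rule eq_matI) (auto simp: fmat_def gmat_def)
  finally show ?thesis .
qed



lemma (in vec_space) rank_le_n:
  assumes "A \<in> carrier_mat n nc"
  shows "rank A \<le> n"
proof -
  obtain S where S: "maximal S (\<lambda>T. T \<subseteq> set (cols A) \<and> lin_indpt T)"
    using maximal_exists[of "(\<lambda>T. T \<subseteq> set (cols A) \<and> lin_indpt T)" "card (set (cols A))" "{}"]
    by (meson List.finite_set card_mono empty_iff empty_subsetI finite_lin_indpt2 rev_finite_subset)
  have "S \<subseteq> set (cols A)" "lin_indpt S" using S by (auto simp: maximal_def)
  moreover have "set (cols A) \<subseteq> carrier_vec n" using assms cols_dim by blast
  ultimately have "card S \<le> dim" using li_le_dim(2)[OF fin_dim] by blast
  then show ?thesis using rank_card_indpt[OF assms S] dim_is_n by simp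
qed

lemma tri_det_nz:
  fixes B :: "'a::field mat"
  assumes B: "B \<in> carrier_mat k k"
    and lt: "\<And>i j. i < j \<Longrightarrow> j < k \<Longrightarrow> B $$ (i,j) = 0"
    and dg: "\<And>i. i < k \<Longrightarrow> B $$ (i,i) \<noteq> 0"
  shows "det B \<noteq> 0"
proof -
  have "det B = prod_list (diag_mat B)" by (rule det_lower_triangular[OF lt B])
  moreover have "0 \<notin> set (diag_mat B)" using dg B by (auto simp: diag_mat_def)
  ultimately show ?thesis by (simp add: prod_list_zero_iff)
qed

lemma rank_f_type:
  fixes F :: "'a::field mat"
  assumes F: "F \<in> carrier_mat k N" and g: "\<And>l. l < k \<Longrightarrow> \<gamma> l < N"
    and d: "det (mat k k (\<lambda>(i,l). F $$ (i, \<gamma> l))) \<noteq> 0"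
  shows "vec_space.rank k F = k"
proof -
  define B where "B = mat k k (\<lambda>(i,l). F $$ (i, \<gamma> l))"
  have B: "B \<in> carrier_mat k k" by (simp add: B_def)
  have rB: "vec_space.rank k B = k" using vec_space.det_rank_iff[OF B] d by (simp add: B_def)
  have dist: "distinct (cols B)"
  proof (rule ccontr)
    assume "\<not> distinct (cols B)"
    then have "vec_space.rank k B < k" using vec_space.non_distinct_low_rank[OF B] by blast
    then show False using rB by simp
  qed
  have li: "LinearCombinations.module.lin_indpt class_ring (module_vec TYPE('a) k) (set (cols B))"
    using vec_space.full_rank_lin_indpt[OF B rB dist] .
  have sub: "set (cols B) \<subseteq> set (cols F)"
  proof
    fix c assume "c \<in> set (cols B)"
    then obtain l where l: "l < k" "c = col B l" using B by (auto simp: in_set_conv_nth)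
    have "c = col F (\<gamma> l)" using l F g by (auto simp: B_def)
    then show "c \<in> set (cols F)" using F g[OF l(1)] by (auto simp: in_set_conv_nth intro!: exI[of _ "\<gamma> l"])
  qed
  have "card (set (cols B)) = k" using distinct_card[OF dist] B by simp
  then have "k \<le> vec_space.rank k F" using vec_space.rank_ge_card_indpt[OF F sub li] by simp
  moreover have "vec_space.rank k F \<le> k" using vec_space.rank_le_n[OF F] .
  ultimately show ?thesis by simp
qed

lemma rank_g_type:
  fixes G :: "'a::field mat"
  assumes G: "G \<in> carrier_mat N k" and g: "\<And>r. r < k \<Longrightarrow> \<rho> r < N"
    and d: "det (mat k k (\<lambda>(r,j). G $$ (\<rho> r, j))) \<noteq> 0"
  shows "vec_space.rank N G = k"
proof -
  define B where "B = mat k k (\<lambda>(r,j). G $$ (\<rho> r, j))"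
  have B: "B \<in> carrier_mat k k" by (simp add: B_def)
  have dB: "det B \<noteq> 0" using d by (simp add: B_def)
  have dist: "distinct (cols G)"
  proof (rule ccontr)
    assume "\<not> distinct (cols G)"
    then obtain i j where ij: "i \<noteq> j" "i < k" "j < k" "cols G ! i = cols G ! j"
      using G by (auto simp: distinct_conv_nth)
    then have "col G i = col G j" using G by simp
    then have "col B i = col B j"
      using ij G g by (auto simp: B_def col_def vec_eq_iff dest!: fun_cong[of _ _ "\<rho> _"]
        intro!: eq_vecI)
    then have "det B = 0" using det_identical_cols[OF B ij(1) ij(2) ij(3)] by simp
    then show False using dB by simp
  qed
  have li: "LinearCombinations.module.lin_indpt class_ring (module_vec TYPE('a) N) (set (cols G))"
  proof (rule ccontr)
    assume "\<not> ?thesis"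
    then obtain v where v: "v \<in> carrier_vec k" "v \<noteq> 0\<^sub>v k" "G *\<^sub>v v = 0\<^sub>v N"
      using vec_space.lin_depE[OF G _ dist] by blast
    have "B *\<^sub>v v = 0\<^sub>v k"
    proof (rule eq_vecI)
      fix r assume r: "r < dim_vec (0\<^sub>v k :: 'a vec)"
      then have r': "r < k" by simp
      have "(B *\<^sub>v v) $ r = row B r \<bullet> v" using B r' by simp
      also have "\<dots> = row G (\<rho> r) \<bullet> v"
        using r' G g[OF r'] v(1) by (simp add: B_def scalar_prod_def)
      also have "\<dots> = (G *\<^sub>v v) $ (\<rho> r)" using G g[OF r'] by simp
      also have "\<dots> = 0" using v(3) g[OF r'] by simp
      finally show "(B *\<^sub>v v) $ r = 0\<^sub>v k $ r" using r' by simp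
    qed (use B in simp)
    then have "det B = 0" using det_0_iff_vec_prod_zero_field[OF B] v by blast
    then show False using dB by simp
  qed
  show ?thesis using vec_space.lin_indpt_full_rank[OF G dist li] .
qed

lemma gblock:
  fixes G :: "'a::field mat" and v :: "nat \<Rightarrow> 'a"
  assumes G: "G \<in> carrier_mat N k" and off: "off + d + k \<le> N"
    and ent: "\<And>i j. i < d + k \<Longrightarrow> j < k \<Longrightarrow> G $$ (off + i, j) = band d v (int i - int j)"
    and nz: "\<exists>i\<le>d. v i \<noteq> 0"
  shows "vec_space.rank N G = k"
proof -
  define p where "p = (LEAST i. v i \<noteq> 0)"
  obtain i0 where i0: "i0 \<le> d" "v i0 \<noteq> 0" using nz by blast
  have vp: "v p \<noteq> 0" unfolding p_def by (rule LeastI[of _ i0]) (use i0 in auto)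
  have pd: "p \<le> d" unfolding p_def using Least_le[of "\<lambda>i. v i \<noteq> 0" i0] i0 by auto
  have below: "v q = 0" if "q < p" for q using not_less_Least[of q "\<lambda>i. v i \<noteq> 0"] that unfolding p_def by auto
  show ?thesis
  proof (rule rank_g_type[OF G, of "\<lambda>r. off + (p + r)"])
    show "off + (p + r) < N" if "r < k" for r using that pd off by simp
    show "det (mat k k (\<lambda>(r, j). G $$ (off + (p + r), j))) \<noteq> 0"
    proof (rule tri_det_nz)
      show "mat k k (\<lambda>(r, j). G $$ (off + (p + r), j)) \<in> carrier_mat k k" by simp
      fix i j
      show "i < j \<Longrightarrow> j < k \<Longrightarrow> mat k k (\<lambda>(r, j). G $$ (off + (p + r), j)) $$ (i, j) = 0"
      proof -
        assume ij: "i < j" "j < k"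
        then have e: "mat k k (\<lambda>(r, j). G $$ (off + (p + r), j)) $$ (i, j) = band d v (int p + int i - int j)"
          using ent[of "p + i" j] pd by simp
        show ?thesis
        proof (cases "int p + int i - int j < 0")
          case True then show ?thesis unfolding e by (simp add: band_def)
        next
          case False
          then have "nat (int p + int i - int j) < p" using ij by simp
          then show ?thesis unfolding e using below by (simp add: band_def)
        qed
      qed
    next
      fix i assume i: "i < k"
      have "mat k k (\<lambda>(r, j). G $$ (off + (p + r), j)) $$ (i, i) = band d v (int p)"
        using ent[of "p + i" i] pd i by simp
      then show "mat k k (\<lambda>(r, j). G $$ (off + (p + r), j)) $$ (i, i) \<noteq> 0"
        using vp pd by (simp add: band_def)
    qed
  qed
qed

lemma fblock:
  fixes F :: "'a::field mat" and v :: "nat \<Rightarrow> 'a"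
  assumes F: "F \<in> carrier_mat k N" and off: "off + d + k \<le> N" and s: "s \<noteq> 0"
    and ent: "\<And>i j. i < k \<Longrightarrow> j < d + k \<Longrightarrow> F $$ (i, off + j) = s * band d v (int d + int k - 1 - int i - int j)"
    and nz: "\<exists>i\<le>d. v i \<noteq> 0"
  shows "vec_space.rank k F = k"
proof -
  define q where "q = (GREATEST i. i \<le> d \<and> v i \<noteq> 0)"
  obtain i0 where i0: "i0 \<le> d" "v i0 \<noteq> 0" using nz by blast
  have vq: "q \<le> d \<and> v q \<noteq> 0" unfolding q_def by (rule GreatestI_nat[of _ i0 d]) (use i0 in auto)
  have above: "v r = 0" if "q < r" "r \<le> d" for r
    using Greatest_le_nat[of "\<lambda>i. i \<le> d \<and> v i \<noteq> 0" r d] that unfolding q_def by auto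
  define \<gamma> where "\<gamma> = (\<lambda>l. off + (d + k - 1 - q - l))"
  have ent': "F $$ (i, \<gamma> l) = s * band d v (int q + int l - int i)" if "i < k" "l < k" for i l
  proof -
    have "d + k - 1 - q - l < d + k" using that vq by simp
    moreover have "int (d + k - 1 - q - l) = int d + int k - 1 - int q - int l" using that vq by simp
    moreover have "int d + int k - 1 - int i - (int d + int k - 1 - int q - int l) = int q + int l - int i" by simp
    ultimately show ?thesis using ent[OF that(1), of "d + k - 1 - q - l"] unfolding \<gamma>_def by (metis)
  qed
  show ?thesis
  proof (rule rank_f_type[OF F, of \<gamma>])
    show "\<gamma> l < N" if "l < k" for l using that vq off by (simp add: \<gamma>_def)
    show "det (mat k k (\<lambda>(i, l). F $$ (i, \<gamma> l))) \<noteq> 0"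
    proof (rule tri_det_nz)
      show "mat k k (\<lambda>(i, l). F $$ (i, \<gamma> l)) \<in> carrier_mat k k" by simp
      fix i j
      show "i < j \<Longrightarrow> j < k \<Longrightarrow> mat k k (\<lambda>(i, l). F $$ (i, \<gamma> l)) $$ (i, j) = 0"
      proof -
        assume ij: "i < j" "j < k"
        then have e: "mat k k (\<lambda>(i, l). F $$ (i, \<gamma> l)) $$ (i, j) = s * band d v (int q + int j - int i)"
          using ent'[of i j] by simp
        show ?thesis
        proof (cases "int q + int j - int i \<le> int d")
          case False then show ?thesis unfolding e by (simp add: band_def)
        next
          case True
          then have "q < nat (int q + int j - int i)" "nat (int q + int j - int i) \<le> d" using ij by simp_all
          then show ?thesis unfolding e using above ij by (simp add: band_def)
        qed
      qed
    next
      fix i assume i: "i < k"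
      have "mat k k (\<lambda>(i, l). F $$ (i, \<gamma> l)) $$ (i, i) = s * band d v (int q)"
        using ent'[of i i] i by simp
      then show "mat k k (\<lambda>(i, l). F $$ (i, \<gamma> l)) $$ (i, i) \<noteq> 0"
        using vq s by (simp add: band_def)
    qed
  qed
qed



lemma hcat_index: "i < dim_row A \<Longrightarrow> j < dim_col A + dim_col B \<Longrightarrow>
  hcat A B $$ (i,j) = (if j < dim_col A then A $$ (i,j) else B $$ (i, j - dim_col A))"
  by (simp add: hcat_def)
lemma hcat_dims[simp]: "dim_row (hcat A B) = dim_row A" "dim_col (hcat A B) = dim_col A + dim_col B"
  by (simp_all add: hcat_def)
lemma append_rows_index: "i < dim_row A + dim_row B \<Longrightarrow> j < dim_col A \<Longrightarrow>
  (A @\<^sub>r B) $$ (i,j) = (if i < dim_row A then A $$ (i,j) else B $$ (i - dim_row A, j))"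
  by (simp add: append_rows_def)
lemma append_rows_dims[simp]: "dim_row (A @\<^sub>r B) = dim_row A + dim_row B" "dim_col (A @\<^sub>r B) = dim_col A"
  by (simp_all add: append_rows_def)

lemma fmat_index: "i < k \<Longrightarrow> j < d + k \<Longrightarrow> fmat d k v $$ (i, j) = band d v (int d + int k - 1 - int i - int j)"
  by (simp add: fmat_def algebra_simps)
lemma gmat_index: "i < d + k \<Longrightarrow> j < k \<Longrightarrow> gmat d k v $$ (i, j) = band d v (int i - int j)"
  by (simp add: gmat_def)
lemma fmat_dims[simp]: "dim_row (fmat d k v) = k" "dim_col (fmat d k v) = d + k" by (simp_all add: fmat_def)
lemma gmat_dims[simp]: "dim_row (gmat d k v) = d + k" "dim_col (gmat d k v) = k" by (simp_all add: gmat_def)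

context
  fixes n m k :: nat and a b c d :: "nat \<Rightarrow> 'b::field"
begin

lemma F_carrier: "f_mat n m k a b c d \<in> carrier_mat k (2 * n + 2 * m + 4 * k)"
proof -
  have "dim_row (f_mat n m k a b c d) = k" unfolding f_mat_def by (simp only: hcat_dims fmat_dims)
  moreover have "dim_col (f_mat n m k a b c d) = n+k+(n+k+(m+k+(m+k)))" unfolding f_mat_def by (simp only: hcat_dims fmat_dims index_uminus_mat)
  ultimately show ?thesis by (intro carrier_matI) simp_all
qed
lemma G_carrier: "g_mat n m k a b c d \<in> carrier_mat (2 * n + 2 * m + 4 * k) k"
proof -
  have "dim_col (g_mat n m k a b c d) = k" unfolding g_mat_def by (simp only: append_rows_dims gmat_dims)
  moreover have "dim_row (g_mat n m k a b c d) = n+k+(n+k+(m+k+(m+k)))" unfolding g_mat_def by (simp only: append_rows_dims gmat_dims)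
  ultimately show ?thesis by (intro carrier_matI) simp_all
qed

lemma F1: "i < k \<Longrightarrow> j < n + k \<Longrightarrow> f_mat n m k a b c d $$ (i, 0 + j) = 1 * band n b (int n + int k - 1 - int i - int j)"
  by (simp add: f_mat_def hcat_index fmat_index)
lemma F2: "i < k \<Longrightarrow> j < n + k \<Longrightarrow> f_mat n m k a b c d $$ (i, (n + k) + j) = (-1) * band n a (int n + int k - 1 - int i - int j)"
  by (simp add: f_mat_def hcat_index fmat_index)
lemma F3: "i < k \<Longrightarrow> j < m + k \<Longrightarrow> f_mat n m k a b c d $$ (i, (2 * n + 2 * k) + j) = 1 * band m d (int m + int k - 1 - int i - int j)"
  by (simp add: f_mat_def hcat_index fmat_index)
lemma F4: "i < k \<Longrightarrow> j < m + k \<Longrightarrow> f_mat n m k a b c d $$ (i, (2 * n + 3 * k + m) + j) = (-1) * band m c (int m + int k - 1 - int i - int j)"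
  by (simp add: f_mat_def hcat_index fmat_index)

lemma G1: "i < n + k \<Longrightarrow> j < k \<Longrightarrow> g_mat n m k a b c d $$ (0 + i, j) = band n a (int i - int j)"
  by (simp add: g_mat_def append_rows_index gmat_index)
lemma G2: "i < n + k \<Longrightarrow> j < k \<Longrightarrow> g_mat n m k a b c d $$ ((n + k) + i, j) = band n b (int i - int j)"
  by (simp add: g_mat_def append_rows_index gmat_index)
lemma G3: "i < m + k \<Longrightarrow> j < k \<Longrightarrow> g_mat n m k a b c d $$ ((2 * n + 2 * k) + i, j) = band m c (int i - int j)"
  by (simp add: g_mat_def append_rows_index gmat_index)
lemma G4: "i < m + k \<Longrightarrow> j < k \<Longrightarrow> g_mat n m k a b c d $$ ((2 * n + 3 * k + m) + i, j) = band m d (int i - int j)"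
  by (simp add: g_mat_def append_rows_index gmat_index)

lemma part2:
  assumes "(\<exists>i\<le>n. a i \<noteq> 0) \<or> (\<exists>i\<le>n. b i \<noteq> 0) \<or> (\<exists>i\<le>m. c i \<noteq> 0) \<or> (\<exists>i\<le>m. d i \<noteq> 0)"
  shows "vec_space.rank k (f_mat n m k a b c d) = k \<and> vec_space.rank (2 * n + 2 * m + 4 * k) (g_mat n m k a b c d) = k"
  using assms
proof (elim disjE)
  assume h: "\<exists>i\<le>n. a i \<noteq> 0"
  show ?thesis
    using fblock[OF F_carrier _ _ F2 h] gblock[OF G_carrier _ G1 h] by simp
next
  assume h: "\<exists>i\<le>n. b i \<noteq> 0"
  show ?thesis
    using fblock[OF F_carrier _ _ F1 h] gblock[OF G_carrier _ G2 h] by simp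
next
  assume h: "\<exists>i\<le>m. c i \<noteq> 0"
  show ?thesis
    using fblock[OF F_carrier _ _ F4 h] gblock[OF G_carrier _ G3 h] by simp
next
  assume h: "\<exists>i\<le>m. d i \<noteq> 0"
  show ?thesis
    using fblock[OF F_carrier _ _ F3 h] gblock[OF G_carrier _ G4 h] by simp
qed

end

theorem lemma4p1:
  fixes n m k :: nat
    and x y z t :: "nat \<Rightarrow> 'a::comm_ring_1"
  assumes "n > 0" and "m > 0" and "k > 0"
  shows "f_mat n m k x y z t * g_mat n m k x y z t = 0\<^sub>m k k
    \<and> (\<forall>(a :: nat \<Rightarrow> 'b::field) b c d.
          ((\<exists>i\<le>n. a i \<noteq> 0) \<or> (\<exists>i\<le>n. b i \<noteq> 0) \<or> (\<exists>i\<le>m. c i \<noteq> 0) \<or> (\<exists>i\<le>m. d i \<noteq> 0))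
          \<longrightarrow> vec_space.rank k (f_mat n m k a b c d) = k
            \<and> vec_space.rank (2 * n + 2 * m + 4 * k) (g_mat n m k a b c d) = k)"
  using part1 part2 by blast

end
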